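(* Let $n\ge 2$ and let $\sigma$ be a uniformly random permutation of $E(G_n)$. Then the probability that there are distinct vertices $w_1,w_2\in W_B=E(G_n)$ with $N_{B(G_n,\sigma)}^{2}(w_1)=N_{B(G_n,\sigma)}^{2}(w_2)$ is in $\mathcal{O}\left(\frac{1}{n}\right)$ as $n\to\infty$.
   Context: $G_n$ is the graph with vertex set $\{1,\dots,2n\}$ and edge set $\{\{i,i+1\}: 1\le i\le 2n-1\}\cup\{\{2n,1\}\}\cup\{\{i,i+n\}: 1\le i\le n\}$. For a permutation $\sigma$ of $E(G_n)$, $B(G_n,\sigma)$ is the bipartite graph with parts $V_B=V(G_n)\times\{0,1\}$ and $W_B=E(G_n)$ and edge set $\{\{(v,0),e\}: v\in e\}\cup\{\{(v,1),e\}: v\in\sigma(e)\}$. For a graph $H$ and vertex $v$, the second neighbourhood is $N_H^{2}(v)=\{u\in V(H): u\neq v \text{ and there is } w \text{ with } \{v,w\},\{w,u\}\in E(H)\}$. *)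

theory Defs
  imports Complex_Main "HOL-Library.Landau_Symbols" "HOL-Combinatorics.Permutations"
begin

definition Gn_V :: "nat \<Rightarrow> nat set" where
  "Gn_V n = {1..2*n}"

definition Gn_E :: "nat \<Rightarrow> nat set set" where
  "Gn_E n = {{i, i+1} | i. 1 \<le> i \<and> i \<le> 2*n - 1} \<union> {{2*n, 1}}
            \<union> {{i, i+n} | i. 1 \<le> i \<and> i \<le> n}"

definition B_V :: "nat \<Rightarrow> ((nat \<times> nat) + nat set) set" where
  "B_V n = Inl ` (Gn_V n \<times> {0,1}) \<union> Inr ` Gn_E n"

definition B_E :: "nat \<Rightarrow> (nat set \<Rightarrow> nat set) \<Rightarrow> ((nat \<times> nat) + nat set) set set" where
  "B_E n \<sigma> = {{Inl (v,0), Inr e} | v e. e \<in> Gn_E n \<and> v \<in> e}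
            \<union> {{Inl (v,1), Inr e} | v e. e \<in> Gn_E n \<and> v \<in> \<sigma> e}"

definition second_nbhd :: "'a set set \<Rightarrow> 'a \<Rightarrow> 'a set" where
  "second_nbhd EH v = {u. u \<noteq> v \<and> (\<exists>w. {v,w} \<in> EH \<and> {w,u} \<in> EH)}"

definition has_twin_edges :: "nat \<Rightarrow> (nat set \<Rightarrow> nat set) \<Rightarrow> bool" where
  "has_twin_edges n \<sigma> \<longleftrightarrow> (\<exists>w1\<in>Gn_E n. \<exists>w2\<in>Gn_E n. w1 \<noteq> w2 \<and>
       second_nbhd (B_E n \<sigma>) (Inr w1) = second_nbhd (B_E n \<sigma>) (Inr w2))"

definition twin_prob :: "nat \<Rightarrow> real" where
  "twin_prob n = real (card {\<sigma>. \<sigma> permutes Gn_E n \<and> has_twin_edges n \<sigma>})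
                 / real (card {\<sigma>. \<sigma> permutes Gn_E n})"

end

theory Submission imports Defs begin

lemma perm_fix_card:
  "finite E \<Longrightarrow> distinct xs \<Longrightarrow> set xs \<subseteq> E \<Longrightarrow>
   card {\<sigma>. \<sigma> permutes E \<and> map \<sigma> xs = ys} \<le> fact (card E - length xs)"
proof (induction xs arbitrary: E ys)
  case Nil
  have "card {\<sigma>. \<sigma> permutes E \<and> map \<sigma> [] = ys} \<le> card {\<sigma>. \<sigma> permutes E}"
    by (rule card_mono) (auto simp: finite_permutations Nil)
  then show ?case using card_permutations[OF refl Nil(1)] by simp
next
  case (Cons x xs)
  show ?case
  proof (cases ys)
    case Nil
    then show ?thesis by simp
  next
    case (Cons y ys')
    show ?thesis
    proof (cases "y \<in> E")
      case False
      have E0: "{\<sigma>. \<sigma> permutes E \<and> map \<sigma> (x#xs) = ys} = {}"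
        using Cons.prems False permutes_in_image[of _ E x] local.Cons by auto
      show ?thesis by (simp only: E0 card.empty zero_le)
    next
      case True
      have xE: "x \<in> E" using Cons.prems by auto
      have Eins: "E = insert x (E - {x})" using xE by auto
      have sub: "{\<sigma>. \<sigma> permutes E \<and> map \<sigma> (x#xs) = ys} \<subseteq>
        (\<lambda>p. transpose x y \<circ> p) ` {p. p permutes (E - {x}) \<and> map p xs = map (transpose x y) ys'}"
      proof
        fix \<sigma> assume s: "\<sigma> \<in> {\<sigma>. \<sigma> permutes E \<and> map \<sigma> (x#xs) = ys}"
        hence sp: "\<sigma> permutes E" and sx: "\<sigma> x = y" and sm: "map \<sigma> xs = ys'" using local.Cons by auto
        have "transpose x (\<sigma> x) \<circ> \<sigma> permutes (E - {x})"
          by (rule permutes_insert_lemma) (use sp Eins in simp)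
        hence p1: "transpose x y \<circ> \<sigma> permutes (E - {x})" using sx by simp
        have p2: "map (transpose x y \<circ> \<sigma>) xs = map (transpose x y) ys'"
          using sm by (metis map_map)
        have "\<sigma> = transpose x y \<circ> (transpose x y \<circ> \<sigma>)" by (simp add: fun_eq_iff)
        thus "\<sigma> \<in> (\<lambda>p. transpose x y \<circ> p) ` {p. p permutes (E - {x}) \<and> map p xs = map (transpose x y) ys'}"
          using p1 p2 by blast
      qed
      have "card {\<sigma>. \<sigma> permutes E \<and> map \<sigma> (x#xs) = ys} \<le>
         card ((\<lambda>p. transpose x y \<circ> p) ` {p. p permutes (E - {x}) \<and> map p xs = map (transpose x y) ys'})"
        by (rule card_mono[OF _ sub]) (auto intro!: finite_imageI simp: finite_permutations Cons.prems)
      also have "\<dots> \<le> card {p. p permutes (E - {x}) \<and> map p xs = map (transpose x y) ys'}"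
        by (rule card_image_le) (auto simp: finite_permutations Cons.prems)
      also have "\<dots> \<le> fact (card (E - {x}) - length xs)"
        using Cons.IH[of "E - {x}"] Cons.prems by auto
      also have "\<dots> = fact (card E - length (x#xs))"
        using xE Cons.prems by (simp add: card_Diff_singleton)
      finally show ?thesis .
    qed
  qed
qed

definition adj :: "nat \<Rightarrow> nat \<Rightarrow> nat \<Rightarrow> bool" where
  "adj n x y \<longleftrightarrow> 1 \<le> x \<and> x \<le> 2*n \<and> 1 \<le> y \<and> y \<le> 2*n \<and>
     (y = x+1 \<or> x = y+1 \<or> (x = 2*n \<and> y = 1) \<or> (x = 1 \<and> y = 2*n) \<or> y = x+n \<or> x = y+n)"
definition sN :: "nat \<Rightarrow> nat \<Rightarrow> nat" where "sN n x = (if x = 2*n then 1 else x+1)"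
definition pN :: "nat \<Rightarrow> nat \<Rightarrow> nat" where "pN n x = (if x = 1 then 2*n else x-1)"
definition oN :: "nat \<Rightarrow> nat \<Rightarrow> nat" where "oN n x = (if x \<le> n then x+n else x-n)"

lemma adj_sym: "adj n x y \<Longrightarrow> adj n y x"
  unfolding adj_def by auto
lemma adj_irrefl: "n \<ge> 3 \<Longrightarrow> \<not> adj n x x"
  unfolding adj_def by auto
lemma adj_nb: "adj n x z \<Longrightarrow> z = sN n x \<or> z = pN n x \<or> z = oN n x"
  unfolding adj_def sN_def pN_def oN_def by auto
lemma nb_adj: "n \<ge> 3 \<Longrightarrow> 1 \<le> x \<Longrightarrow> x \<le> 2*n \<Longrightarrow> adj n x (sN n x) \<and> adj n x (pN n x) \<and> adj n x (oN n x)"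
  unfolding adj_def sN_def pN_def oN_def by auto
lemma nb_dist: "n \<ge> 3 \<Longrightarrow> 1 \<le> x \<Longrightarrow> x \<le> 2*n \<Longrightarrow> sN n x \<noteq> pN n x \<and> sN n x \<noteq> oN n x \<and> pN n x \<noteq> oN n x"
  unfolding sN_def pN_def oN_def by auto
lemma nb_sp: "n \<ge> 3 \<Longrightarrow> 1 \<le> x \<Longrightarrow> x \<le> 2*n \<Longrightarrow> \<not> adj n (sN n x) (pN n x)"
  unfolding adj_def sN_def pN_def by (cases "x = 2*n"; cases "x = 1"; simp; arith)
lemma nb_so: "n \<ge> 3 \<Longrightarrow> 1 \<le> x \<Longrightarrow> x \<le> 2*n \<Longrightarrow> \<not> adj n (sN n x) (oN n x)"
  unfolding adj_def sN_def oN_def by (cases "x = 2*n"; cases "x \<le> n"; simp; arith)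
lemma nb_po: "n \<ge> 3 \<Longrightarrow> 1 \<le> x \<Longrightarrow> x \<le> 2*n \<Longrightarrow> \<not> adj n (pN n x) (oN n x)"
  unfolding adj_def pN_def oN_def by (cases "x = 1"; cases "x \<le> n"; simp; arith)
lemma adj_triangle: "n \<ge> 3 \<Longrightarrow> adj n x y \<Longrightarrow> adj n y z \<Longrightarrow> adj n z x \<Longrightarrow> False"
proof -
  assume n: "n \<ge> 3" and a: "adj n x y" "adj n y z" "adj n z x"
  have x: "1 \<le> x" "x \<le> 2*n" using a(1) unfolding adj_def by auto
  have yz: "y \<noteq> z" using a(2) adj_irrefl n by blast
  have y: "y = sN n x \<or> y = pN n x \<or> y = oN n x" using adj_nb a(1) by blast
  have z: "z = sN n x \<or> z = pN n x \<or> z = oN n x" using adj_nb adj_sym a(3) by blast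
  show False using y z yz a(2) adj_sym nb_sp[OF n x] nb_so[OF n x] nb_po[OF n x] by metis
qed

lemma mem1: "1 \<le> i \<Longrightarrow> i \<le> 2*n-1 \<Longrightarrow> {i,i+1} \<in> Gn_E n"
  unfolding Gn_E_def apply (rule UnI1, rule UnI1) by (rule CollectI, rule exI[of _ i]) simp
lemma mem2: "{2*n,1} \<in> Gn_E n"
  unfolding Gn_E_def apply (rule UnI1, rule UnI2) by (rule singletonI)
lemma mem3: "1 \<le> i \<Longrightarrow> i \<le> n \<Longrightarrow> {i,i+n} \<in> Gn_E n"
  unfolding Gn_E_def apply (rule UnI2) by (rule CollectI, rule exI[of _ i]) simp

lemma E_adj: "n \<ge> 1 \<Longrightarrow> e \<in> Gn_E n \<Longrightarrow> \<exists>x y. e = {x,y} \<and> adj n x y"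
proof -
  assume n1: "n \<ge> 1" and "e \<in> Gn_E n"
  then consider (a) i where "e = {i,i+1}" "1 \<le> i" "i \<le> 2*n - 1" | (b) "e = {2*n,1}" | (c) i where "e = {i,i+n}" "1 \<le> i" "i \<le> n"
    unfolding Gn_E_def by (elim UnE CollectE exE conjE singletonE) blast+
  then show ?thesis
  proof cases
    case a
    have "adj n i (i+1)" using a n1 unfolding adj_def by (simp; arith)
    then show ?thesis using a(1) by blast
  next
    case b
    have "adj n (2*n) 1" using n1 unfolding adj_def by simp
    then show ?thesis using b(1) by blast
  next
    case c
    have "adj n i (i+n)" using c n1 unfolding adj_def by simp
    then show ?thesis using c(1) by blast
  qed
qed

lemma adj_E: "adj n x y \<Longrightarrow> {x,y} \<in> Gn_E n"
proof -
  assume a: "adj n x y"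
  have x: "1 \<le> x" "x \<le> 2*n" "1 \<le> y" "y \<le> 2*n" using a unfolding adj_def by auto
  consider "y = x+1" | "x = y+1" | "x = 2*n \<and> y = 1" | "x = 1 \<and> y = 2*n" | "y = x+n" | "x = y+n"
    using a unfolding adj_def by blast
  then show ?thesis
  proof cases
    case 1 then show ?thesis using x mem1[of x n] by simp
  next
    case 2 then have "{x,y} = {y, y+1}" by (simp add: insert_commute)
    then show ?thesis using x 2 mem1[of y n] by simp
  next
    case 3 then show ?thesis using mem2[of n] by simp
  next
    case 4 then have "{x,y} = {2*n,1}" by (simp add: insert_commute)
    then show ?thesis using mem2[of n] by simp
  next
    case 5 then show ?thesis using x mem3[of x n] by simp
  next
    case 6 then have "{x,y} = {y, y+n}" by (simp add: insert_commute)
    then show ?thesis using x 6 mem3[of y n] by simp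
  qed
qed

lemma adj_two_others: "n \<ge> 3 \<Longrightarrow> adj n x v \<Longrightarrow>
   \<exists>u1 u2. adj n x u1 \<and> adj n x u2 \<and> u1 \<noteq> u2 \<and> u1 \<noteq> v \<and> u2 \<noteq> v"
proof -
  assume n: "n \<ge> 3" and a: "adj n x v"
  have x: "1 \<le> x" "x \<le> 2*n" using a unfolding adj_def by auto
  note as = nb_adj[OF n x] and d = nb_dist[OF n x]
  show ?thesis
  proof (cases "v = sN n x")
    case True then show ?thesis using as d
      by (intro exI[of _ "pN n x"] exI[of _ "oN n x"]) simp
  next
    case False
    show ?thesis
    proof (cases "v = pN n x")
      case True then show ?thesis using as d
        by (intro exI[of _ "sN n x"] exI[of _ "oN n x"]) simp
    next
      case False2: False
      then show ?thesis using as d False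
        by (intro exI[of _ "sN n x"] exI[of _ "pN n x"]) simp
    qed
  qed
qed

lemma pick2:
  assumes "distinct [u,v,u1,u2,v1,v2::nat]" "c \<notin> {u,v}" "d \<notin> {u,v}"
  shows "\<exists>f g. (f = {u,u1} \<or> f = {u,u2} \<or> f = {v,v1} \<or> f = {v,v2}) \<and>
     (g = {u,u1} \<or> g = {u,u2} \<or> g = {v,v1} \<or> g = {v,v2}) \<and>
     f \<noteq> g \<and> f \<inter> {c,d} = {} \<and> g \<inter> {c,d} = {}"
proof -
  have d: "u \<noteq> v" "u \<noteq> u1" "u \<noteq> u2" "u \<noteq> v1" "u \<noteq> v2" "v \<noteq> u1" "v \<noteq> u2" "v \<noteq> v1" "v \<noteq> v2"
    "u1 \<noteq> u2" "u1 \<noteq> v1" "u1 \<noteq> v2" "u2 \<noteq> v1" "u2 \<noteq> v2" "v1 \<noteq> v2"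
    using assms(1) by simp_all
  have cd: "c \<noteq> u" "c \<noteq> v" "d \<noteq> u" "d \<noteq> v" using assms(2,3) by simp_all
  have ne1: "{u,u1} \<noteq> {u,u2}" "{u,u1} \<noteq> {v,v1}" "{u,u1} \<noteq> {v,v2}" "{u,u2} \<noteq> {v,v1}" "{u,u2} \<noteq> {v,v2}" "{v,v1} \<noteq> {v,v2}"
    using d by (auto simp: doubleton_eq_iff)
  have I: "\<And>a b. a \<notin> {c,d} \<Longrightarrow> b \<notin> {c,d} \<Longrightarrow> {a,b} \<inter> {c,d} = {}" by auto
  have Iu: "u \<notin> {c,d}" "v \<notin> {c,d}" using cd by auto
  consider (A) "u1 \<notin> {c,d}" "u2 \<notin> {c,d}" | (B) "u1 \<notin> {c,d}" "v1 \<notin> {c,d}" | (C) "u1 \<notin> {c,d}" "v2 \<notin> {c,d}"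
    | (D) "u2 \<notin> {c,d}" "v1 \<notin> {c,d}" | (E) "u2 \<notin> {c,d}" "v2 \<notin> {c,d}" | (F) "v1 \<notin> {c,d}" "v2 \<notin> {c,d}"
    using d by blast
  then show ?thesis
  proof cases
    case A show ?thesis
      apply (rule exI[of _ "{u,u1}"], rule exI[of _ "{u,u2}"])
      using ne1 I[OF Iu(1) A(1)] I[OF Iu(1) A(2)] by simp
  next
    case B show ?thesis
      apply (rule exI[of _ "{u,u1}"], rule exI[of _ "{v,v1}"])
      using ne1 I[OF Iu(1) B(1)] I[OF Iu(2) B(2)] by simp
  next
    case C show ?thesis
      apply (rule exI[of _ "{u,u1}"], rule exI[of _ "{v,v2}"])
      using ne1 I[OF Iu(1) C(1)] I[OF Iu(2) C(2)] by simp
  next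
    case D show ?thesis
      apply (rule exI[of _ "{u,u2}"], rule exI[of _ "{v,v1}"])
      using ne1 I[OF Iu(1) D(1)] I[OF Iu(2) D(2)] by simp
  next
    case E show ?thesis
      apply (rule exI[of _ "{u,u2}"], rule exI[of _ "{v,v2}"])
      using ne1 I[OF Iu(1) E(1)] I[OF Iu(2) E(2)] by simp
  next
    case F show ?thesis
      apply (rule exI[of _ "{v,v1}"], rule exI[of _ "{v,v2}"])
      using ne1 I[OF Iu(2) F(1)] I[OF Iu(2) F(2)] by simp
  qed
qed

lemma edge_props: "{a,b} \<in> Gn_E n \<Longrightarrow> x \<notin> {a,b} \<Longrightarrow> x \<in> e \<Longrightarrow> a \<in> e \<Longrightarrow>
   {a,b} \<in> Gn_E n \<and> {a,b} \<noteq> e \<and> {a,b} \<inter> e \<noteq> {}"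
proof (intro conjI)
  assume h: "{a,b} \<in> Gn_E n" "x \<notin> {a,b}" "x \<in> e" "a \<in> e"
  show "{a,b} \<in> Gn_E n" by (rule h(1))
  show "{a,b} \<noteq> e" by (rule notI) (use h(2,3) in simp)
  have "a \<in> {a,b} \<inter> e" using h(4) by simp
  then show "{a,b} \<inter> e \<noteq> {}" by (rule_tac notI) simp
qed

lemma two_edges:
  assumes n: "n \<ge> 3" and e1: "e1 \<in> Gn_E n" and e2: "e2 \<in> Gn_E n" and disj: "e1 \<inter> e2 = {}"
  shows "\<exists>f g. f \<in> Gn_E n \<and> g \<in> Gn_E n \<and> f \<noteq> g \<and> f \<noteq> e1 \<and> g \<noteq> e1 \<and>
     f \<inter> e1 \<noteq> {} \<and> g \<inter> e1 \<noteq> {} \<and> f \<inter> e2 = {} \<and> g \<inter> e2 = {}"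
proof -
  have n1: "n \<ge> 1" using n by simp
  obtain u v where e1uv: "e1 = {u,v}" and uv: "adj n u v" using E_adj[OF n1 e1] by blast
  obtain c d where e2cd: "e2 = {c,d}" using E_adj[OF n1 e2] by blast
  obtain u1 u2 where u: "adj n u u1" "adj n u u2" "u1 \<noteq> u2" "u1 \<noteq> v" "u2 \<noteq> v"
    using adj_two_others[OF n uv] by blast
  obtain v1 v2 where v: "adj n v v1" "adj n v v2" "v1 \<noteq> v2" "v1 \<noteq> u" "v2 \<noteq> u"
    using adj_two_others[OF n adj_sym[OF uv]] by blast
  have irr: "\<And>x. \<not> adj n x x" using adj_irrefl[OF n] by blast
  have tri: "\<And>x y z. adj n x y \<Longrightarrow> adj n y z \<Longrightarrow> adj n z x \<Longrightarrow> False" using adj_triangle[OF n] by blast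
  have "u1 \<noteq> v1" using tri[OF uv v(1)] u(1) adj_sym by metis
  moreover have "u1 \<noteq> v2" using tri[OF uv v(2)] u(1) adj_sym by metis
  moreover have "u2 \<noteq> v1" using tri[OF uv v(1)] u(2) adj_sym by metis
  moreover have "u2 \<noteq> v2" using tri[OF uv v(2)] u(2) adj_sym by metis
  moreover have uvn: "u \<noteq> v" "u \<noteq> u1" "u \<noteq> u2" "v \<noteq> v1" "v \<noteq> v2"
    using irr uv u v by metis+
  ultimately have dist: "distinct [u,v,u1,u2,v1,v2]" using u v by simp
  have cd: "c \<notin> {u,v}" "d \<notin> {u,v}" using disj e1uv e2cd by auto
  obtain f g where fg: "f = {u,u1} \<or> f = {u,u2} \<or> f = {v,v1} \<or> f = {v,v2}"
     "g = {u,u1} \<or> g = {u,u2} \<or> g = {v,v1} \<or> g = {v,v2}"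
     "f \<noteq> g" "f \<inter> {c,d} = {}" "g \<inter> {c,d} = {}"
    using pick2[OF dist cd] by blast
  have vu: "v \<in> e1" "u \<in> e1" using e1uv by simp_all
  have P1: "{u,u1} \<in> Gn_E n \<and> {u,u1} \<noteq> e1 \<and> {u,u1} \<inter> e1 \<noteq> {}"
    by (rule edge_props[OF adj_E[OF u(1)] _ vu]) (use uvn(1) u(4) in simp)
  have P2: "{u,u2} \<in> Gn_E n \<and> {u,u2} \<noteq> e1 \<and> {u,u2} \<inter> e1 \<noteq> {}"
    by (rule edge_props[OF adj_E[OF u(2)] _ vu]) (use uvn(1) u(5) in simp)
  have P3: "{v,v1} \<in> Gn_E n \<and> {v,v1} \<noteq> e1 \<and> {v,v1} \<inter> e1 \<noteq> {}"
    by (rule edge_props[OF adj_E[OF v(1)] _ vu(2) vu(1)]) (use uvn(1) v(4) in simp)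
  have P4: "{v,v2} \<in> Gn_E n \<and> {v,v2} \<noteq> e1 \<and> {v,v2} \<inter> e1 \<noteq> {}"
    by (rule edge_props[OF adj_E[OF v(2)] _ vu(2) vu(1)]) (use uvn(1) v(5) in simp)
  have P: "\<And>h. h = {u,u1} \<or> h = {u,u2} \<or> h = {v,v1} \<or> h = {v,v2} \<Longrightarrow>
      h \<in> Gn_E n \<and> h \<noteq> e1 \<and> h \<inter> e1 \<noteq> {}"
    using P1 P2 P3 P4 by (elim disjE) simp_all
  have A: "f \<in> Gn_E n \<and> f \<noteq> e1 \<and> f \<inter> e1 \<noteq> {}" "g \<in> Gn_E n \<and> g \<noteq> e1 \<and> g \<inter> e1 \<noteq> {}"
    by (rule P[OF fg(1)], rule P[OF fg(2)])
  have C: "f \<inter> e2 = {}" "g \<inter> e2 = {}" unfolding e2cd by (rule fg(4), rule fg(5))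
  show ?thesis using A C fg(3) by (intro exI[of _ f] exI[of _ g]) simp
qed


lemma BE_in0: "e \<in> Gn_E n \<Longrightarrow> x \<in> e \<Longrightarrow> {Inr e, Inl (x,0)} \<in> B_E n \<sigma>"
proof -
  assume a: "e \<in> Gn_E n" "x \<in> e"
  have "{Inl (x,0), Inr e} \<in> B_E n \<sigma>"
    unfolding B_E_def apply (rule UnI1, rule CollectI)
    by (rule exI[of _ x], rule exI[of _ e]) (simp add: a)
  then show ?thesis by (simp add: insert_commute)
qed

lemma BE_mem: "{Inr e, w} \<in> B_E n \<sigma> \<Longrightarrow>
   e \<in> Gn_E n \<and> ((\<exists>x. w = Inl (x,0) \<and> x \<in> e) \<or> (\<exists>x. w = Inl (x,1) \<and> x \<in> \<sigma> e))"
  unfolding B_E_def by (auto simp: doubleton_eq_iff)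

lemma snb1: "e \<in> Gn_E n \<Longrightarrow> f \<in> Gn_E n \<Longrightarrow> f \<noteq> e \<Longrightarrow> e \<inter> f \<noteq> {} \<Longrightarrow>
   Inr f \<in> second_nbhd (B_E n \<sigma>) (Inr e)"
proof -
  assume a: "e \<in> Gn_E n" "f \<in> Gn_E n" "f \<noteq> e" "e \<inter> f \<noteq> {}"
  obtain x where x: "x \<in> e" "x \<in> f" using a(4) by blast
  have "{Inr e, Inl (x,0)} \<in> B_E n \<sigma>" by (rule BE_in0[OF a(1) x(1)])
  moreover have "{Inl (x,0), Inr f} \<in> B_E n \<sigma>" using BE_in0[OF a(2) x(2)] by (simp add: insert_commute)
  ultimately show ?thesis unfolding second_nbhd_def using a(3) by blast
qed

lemma snb2: "Inr f \<in> second_nbhd (B_E n \<sigma>) (Inr e) \<Longrightarrow>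
   f \<noteq> e \<and> (e \<inter> f \<noteq> {} \<or> \<sigma> e \<inter> \<sigma> f \<noteq> {})"
proof -
  assume "Inr f \<in> second_nbhd (B_E n \<sigma>) (Inr e)"
  then obtain w where w: "Inr f \<noteq> Inr e" "{Inr e, w} \<in> B_E n \<sigma>" "{w, Inr f} \<in> B_E n \<sigma>"
    unfolding second_nbhd_def by blast
  have w2: "{Inr f, w} \<in> B_E n \<sigma>" using w(3) by (simp add: insert_commute)
  show ?thesis using BE_mem[OF w(2)] BE_mem[OF w2] w(1) by auto
qed

lemma snb3: "Inr e \<notin> second_nbhd (B_E n \<sigma>) (Inr e)"
  unfolding second_nbhd_def by blast

definition L :: "nat \<Rightarrow> nat set \<Rightarrow> nat set set" where
  "L n e = {f \<in> Gn_E n. f \<inter> e \<noteq> {}}"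

definition tup :: "'a set \<Rightarrow> ('a\<Rightarrow>'a\<Rightarrow>'a set) \<Rightarrow> ('a\<Rightarrow>'a\<Rightarrow>'a set) \<Rightarrow> ('a\<Rightarrow>'a\<Rightarrow>'a set) \<Rightarrow> 'a list set" where
  "tup A F1 F2 F3 = (\<lambda>(a,b,c,d,e). [a,b,c,d,e]) ` (SIGMA a:A. SIGMA b:A. F1 a b \<times> F2 a b \<times> F3 a b)"

lemma tupI: "a \<in> A \<Longrightarrow> b \<in> A \<Longrightarrow> c \<in> F1 a b \<Longrightarrow> d \<in> F2 a b \<Longrightarrow> e \<in> F3 a b \<Longrightarrow> [a,b,c,d,e] \<in> tup A F1 F2 F3"
  unfolding tup_def by (rule image_eqI[where x="(a,b,c,d,e)"]) auto

lemma tup_set: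
  assumes "xs \<in> tup A F1 F2 F3" "\<And>a b. F1 a b \<subseteq> A" "\<And>a b. F2 a b \<subseteq> A" "\<And>a b. F3 a b \<subseteq> A"
  shows "set xs \<subseteq> A \<and> length xs = 5"
  using assms(1) unfolding tup_def
  by (auto dest: subsetD[OF assms(2)] subsetD[OF assms(3)] subsetD[OF assms(4)])

lemma sb: "(\<And>i. i\<in>A \<Longrightarrow> f i \<le> (K::nat)) \<Longrightarrow> sum f A \<le> card A * K"
  using sum_bounded_above[of A f K] by simp

lemma tup_card:
  assumes "finite A" and "\<And>a b. a \<in> A \<Longrightarrow> b \<in> A \<Longrightarrow> finite (F1 a b) \<and> finite (F2 a b) \<and> finite (F3 a b)"
    and "\<And>a b. a \<in> A \<Longrightarrow> b \<in> A \<Longrightarrow> card (F1 a b) \<le> K \<and> card (F2 a b) \<le> K \<and> card (F3 a b) \<le> K"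
  shows "finite (tup A F1 F2 F3) \<and> card (tup A F1 F2 F3) \<le> card A ^ 2 * K ^ 3"
proof -
  let ?S = "SIGMA a:A. SIGMA b:A. F1 a b \<times> F2 a b \<times> F3 a b"
  have fin: "finite ?S" using assms(1,2) by (intro finite_SigmaI finite_cartesian_product) auto
  have inner: "card (SIGMA b:A. F1 a b \<times> F2 a b \<times> F3 a b) \<le> card A * K^3" if a: "a \<in> A" for a
  proof -
    have "card (SIGMA b:A. F1 a b \<times> F2 a b \<times> F3 a b) = (\<Sum>b\<in>A. card (F1 a b \<times> F2 a b \<times> F3 a b))"
      using assms(1,2) a by (intro card_SigmaI) auto
    also have "\<dots> \<le> card A * K^3"
    proof (rule sb)
      fix b assume b: "b \<in> A"
      have "card (F1 a b \<times> F2 a b \<times> F3 a b) = card (F1 a b) * card (F2 a b) * card (F3 a b)"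
        by (simp add: card_cartesian_product)
      also have "\<dots> \<le> K * K * K" using assms(3)[OF a b] by (intro mult_le_mono) auto
      finally show "card (F1 a b \<times> F2 a b \<times> F3 a b) \<le> K^3" by (simp add: power3_eq_cube)
    qed
    finally show ?thesis .
  qed
  have "card ?S = (\<Sum>a\<in>A. card (SIGMA b:A. F1 a b \<times> F2 a b \<times> F3 a b))"
    using assms(1,2) by (intro card_SigmaI) (auto intro!: finite_SigmaI finite_cartesian_product)
  also have "\<dots> \<le> card A * (card A * K^3)" by (rule sb) (rule inner)
  finally have "card ?S \<le> card A ^ 2 * K ^ 3" by (simp add: power2_eq_square)
  moreover have "card (tup A F1 F2 F3) \<le> card ?S" unfolding tup_def by (rule card_image_le[OF fin])
  ultimately show ?thesis unfolding tup_def using fin by auto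
qed


lemma L_sub_E: "L n e \<subseteq> Gn_E n"
  unfolding L_def by blast

lemma L_elem: assumes n1: "n \<ge> 1" and f: "f \<in> L n e"
  shows "\<exists>z w. f = {z,w} \<and> z \<in> e \<and> adj n z w"
proof -
  have fE: "f \<in> Gn_E n" and fe: "f \<inter> e \<noteq> {}" using f unfolding L_def by auto
  obtain a b where ab: "f = {a,b}" "adj n a b" using E_adj[OF n1 fE] by blast
  obtain z where z: "z \<in> f" "z \<in> e" using fe by blast
  show ?thesis
  proof (cases "z = a")
    case True then show ?thesis using ab z by blast
  next
    case False
    then have "z = b" using z(1) ab(1) by simp
    then have "f = {z,a}" "adj n z a" using ab adj_sym by (auto simp: insert_commute)
    then show ?thesis using z by blast
  qed
qed

lemma L_card: assumes n1: "n \<ge> 1" and e: "e \<in> Gn_E n"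
  shows "finite (L n e) \<and> card (L n e) \<le> 6"
proof -
  obtain x y where xy: "e = {x,y}" using E_adj[OF n1 e] by blast
  let ?l = "[{x, sN n x}, {x, pN n x}, {x, oN n x}, {y, sN n y}, {y, pN n y}, {y, oN n y}]"
  have sub: "L n e \<subseteq> set ?l"
  proof
    fix f assume "f \<in> L n e"
    then obtain z w where zw: "f = {z,w}" "z \<in> e" "adj n z w" using L_elem[OF n1] by blast
    have "w = sN n z \<or> w = pN n z \<or> w = oN n z" using adj_nb[OF zw(3)] .
    moreover have "z = x \<or> z = y" using zw(2) xy by simp
    ultimately show "f \<in> set ?l" using zw(1) by (elim disjE) simp_all
  qed
  have "card (L n e) \<le> card (set ?l)" by (rule card_mono[OF _ sub]) simp
  also have "\<dots> \<le> length ?l" by (rule card_length)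
  finally show ?thesis using sub finite_subset by (simp; blast)
qed

definition Dn :: "nat \<Rightarrow> nat set list set" where
  "Dn n = tup (Gn_E n) (\<lambda>a b. L n a) (\<lambda>a b. L n a) (\<lambda>a b. L n b)"
definition Tn :: "nat \<Rightarrow> nat set list set" where
  "Tn n = tup (Gn_E n) (\<lambda>a b. L n b) (\<lambda>a b. L n b) (\<lambda>a b. L n a)"

lemma twin_event:
  assumes n: "n \<ge> 3" and sp: "\<sigma> permutes Gn_E n" and tw: "has_twin_edges n \<sigma>"
  shows "\<exists>xs \<in> Dn n. distinct xs \<and> map \<sigma> xs \<in> Tn n"
proof -
  obtain e1 e2 where e: "e1 \<in> Gn_E n" "e2 \<in> Gn_E n" "e1 \<noteq> e2"
    and eq: "second_nbhd (B_E n \<sigma>) (Inr e1) = second_nbhd (B_E n \<sigma>) (Inr e2)"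
    using tw unfolding has_twin_edges_def by blast
  have n1: "n \<ge> 1" using n by simp
  have ne: "\<And>e. e \<in> Gn_E n \<Longrightarrow> e \<noteq> {}" using E_adj[OF n1] by blast
  have disj: "e1 \<inter> e2 = {}"
  proof (rule ccontr)
    assume "e1 \<inter> e2 \<noteq> {}"
    then have "Inr e2 \<in> second_nbhd (B_E n \<sigma>) (Inr e1)" using snb1[OF e(1) e(2)] e(3) by metis
    then show False using eq snb3 by metis
  qed
  have disj': "e2 \<inter> e1 = {}" using disj by blast
  obtain f g where fg: "f \<in> Gn_E n" "g \<in> Gn_E n" "f \<noteq> g" "f \<noteq> e1" "g \<noteq> e1"
     "f \<inter> e1 \<noteq> {}" "g \<inter> e1 \<noteq> {}" "f \<inter> e2 = {}" "g \<inter> e2 = {}"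
    using two_edges[OF n e(1) e(2) disj] by blast
  obtain h h' where hh: "h \<in> Gn_E n" "h \<noteq> e2" "h \<inter> e2 \<noteq> {}" "h \<inter> e1 = {}"
    using two_edges[OF n e(2) e(1) disj'] by blast
  have fe2: "f \<noteq> e2" proof assume "f = e2" then show False using fg(8) ne[OF e(2)] by simp qed
  have ge2: "g \<noteq> e2" proof assume "g = e2" then show False using fg(9) ne[OF e(2)] by simp qed
  have he1: "h \<noteq> e1" proof assume "h = e1" then show False using hh(4) ne[OF e(1)] by simp qed
  have hf: "h \<noteq> f" proof assume "h = f" then show False using hh(4) fg(6) by simp qed
  have hg: "h \<noteq> g" proof assume "h = g" then show False using hh(4) fg(7) by simp qed
  have sE: "\<And>x. x \<in> Gn_E n \<Longrightarrow> \<sigma> x \<in> Gn_E n" by (simp add: permutes_in_image[OF sp])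
  have key: "\<sigma> x \<in> L n (\<sigma> y)" if x: "x \<in> Gn_E n" "x \<noteq> y" "x \<inter> y = {}" "x \<noteq> z" "x \<inter> z \<noteq> {}"
     and y: "y \<in> Gn_E n" and z: "z \<in> Gn_E n"
     and eqq: "second_nbhd (B_E n \<sigma>) (Inr z) = second_nbhd (B_E n \<sigma>) (Inr y)" for x y z
  proof -
    have "z \<inter> x \<noteq> {}" using x(5) by blast
    then have "Inr x \<in> second_nbhd (B_E n \<sigma>) (Inr z)" using snb1[OF z x(1) x(4)] by blast
    then have "Inr x \<in> second_nbhd (B_E n \<sigma>) (Inr y)" using eqq by simp
    then have "\<sigma> y \<inter> \<sigma> x \<noteq> {}" using snb2 x(3) by blast
    then show ?thesis unfolding L_def using sE[OF x(1)] by blast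
  qed
  have kf: "\<sigma> f \<in> L n (\<sigma> e2)" by (rule key[OF fg(1) fe2 fg(8) fg(4) fg(6) e(2) e(1) eq])
  have kg: "\<sigma> g \<in> L n (\<sigma> e2)" by (rule key[OF fg(2) ge2 fg(9) fg(5) fg(7) e(2) e(1) eq])
  have kh: "\<sigma> h \<in> L n (\<sigma> e1)" by (rule key[OF hh(1) he1 hh(4) hh(2) hh(3) e(1) e(2) eq[symmetric]])
  have L1: "f \<in> L n e1" "g \<in> L n e1" "h \<in> L n e2" unfolding L_def using fg hh by auto
  have inD: "[e1,e2,f,g,h] \<in> Dn n" unfolding Dn_def by (rule tupI) (use e L1 in auto)
  have inT: "map \<sigma> [e1,e2,f,g,h] \<in> Tn n" unfolding Tn_def by (simp, rule tupI) (use sE e kf kg kh in auto)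
  have dist: "distinct [e1,e2,f,g,h]" using e(3) fg(3,4,5) fe2 ge2 he1 hh(2) hf hg by auto
  show ?thesis using inD inT dist by blast
qed


lemma perm_in_T:
  assumes "finite E" "distinct xs" "set xs \<subseteq> E" "finite T"
  shows "card {\<sigma>. \<sigma> permutes E \<and> map \<sigma> xs \<in> T} \<le> card T * fact (card E - length xs)"
proof -
  have "{\<sigma>. \<sigma> permutes E \<and> map \<sigma> xs \<in> T} = (\<Union>ys\<in>T. {\<sigma>. \<sigma> permutes E \<and> map \<sigma> xs = ys})" by blast
  then have "card {\<sigma>. \<sigma> permutes E \<and> map \<sigma> xs \<in> T} \<le> (\<Sum>ys\<in>T. card {\<sigma>. \<sigma> permutes E \<and> map \<sigma> xs = ys})"
    using card_UN_le[OF assms(4)] by simp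
  also have "\<dots> \<le> card T * fact (card E - length xs)"
    by (rule sb) (rule perm_fix_card[OF assms(1-3)])
  finally show ?thesis .
qed

lemma E_sub_Pow: "n \<ge> 1 \<Longrightarrow> Gn_E n \<subseteq> Pow {1..2*n}"
proof
  fix e assume n1: "n \<ge> 1" and e: "e \<in> Gn_E n"
  obtain x y where "e = {x,y}" "adj n x y" using E_adj[OF n1 e] by blast
  then show "e \<in> Pow {1..2*n}" unfolding adj_def by auto
qed

lemma E_finite: "n \<ge> 1 \<Longrightarrow> finite (Gn_E n)"
  using E_sub_Pow finite_subset by blast

lemma E_eq: "Gn_E n = (\<lambda>i. {i,i+1}) ` {1..2*n-1} \<union> {{2*n,1}} \<union> (\<lambda>i. {i,i+n}) ` {1..n}"
proof -
  have a: "\<And>k::nat. {i. 1 \<le> i \<and> i \<le> k} = {1..k}" by auto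
  show ?thesis unfolding Gn_E_def by (simp only: setcompr_eq_image a)
qed

lemma E_card_upper: "n \<ge> 1 \<Longrightarrow> card (Gn_E n) \<le> 3*n"
proof -
  assume n1: "n \<ge> 1"
  have "card (Gn_E n) \<le> card ((\<lambda>i. {i,i+1}) ` {1..2*n-1} \<union> {{2*n,1}}) + card ((\<lambda>i. {i,i+n}) ` {1..n})"
    unfolding E_eq by (rule card_Un_le)
  also have "\<dots> \<le> (card ((\<lambda>i. {i,i+1}) ` {1..2*n-1}) + card {{2*n,1}}) + card ((\<lambda>i. {i,i+n}) ` {1..n})"
    by (intro add_mono card_Un_le order.refl)
  also have "\<dots> \<le> (card {1..2*n-1} + 1) + card {1..n}"
    by (intro add_mono card_image_le) auto
  also have "\<dots> \<le> 3*n" using n1 by simp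
  finally show ?thesis .
qed

lemma E_card_lower: "n \<ge> 1 \<Longrightarrow> 2*n - 1 \<le> card (Gn_E n)"
proof -
  assume n1: "n \<ge> 1"
  have inj: "inj_on (\<lambda>i::nat. {i,i+1}) {1..2*n-1}"
    by (auto simp: inj_on_def doubleton_eq_iff)
  have "2*n - 1 = card ((\<lambda>i. {i,i+1}) ` {1..2*n-1})" using card_image[OF inj] by simp
  also have "\<dots> \<le> card (Gn_E n)"
    by (rule card_mono[OF E_finite[OF n1]]) (unfold E_eq, blast)
  finally show ?thesis .
qed

lemma fact_lower: "fact k * (k+1)^j \<le> (fact (k+j) :: nat)"
proof (induction j)
  case 0 then show ?case by simp
next
  case (Suc j)
  have "fact k * (k+1)^(Suc j) = (k+1) * (fact k * (k+1)^j)" by (simp add: algebra_simps)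
  also have "\<dots> \<le> Suc (k+j) * fact (k+j)" using Suc.IH by (intro mult_le_mono) auto
  also have "\<dots> = fact (k + Suc j)" by simp
  finally show ?case .
qed

lemma twin_count:
  assumes n: "n \<ge> 5"
  shows "card {\<sigma>. \<sigma> permutes Gn_E n \<and> has_twin_edges n \<sigma>} * n \<le> 1944^2 * fact (card (Gn_E n))"
proof -
  let ?E = "Gn_E n" let ?m = "card ?E"
  have n1: "n \<ge> 1" and n3: "n \<ge> 3" using n by auto
  have finE: "finite ?E" by (rule E_finite[OF n1])
  have Lc: "\<And>a b. a \<in> ?E \<Longrightarrow> b \<in> ?E \<Longrightarrow> finite (L n a) \<and> finite (L n b)" using L_card[OF n1] by blast
  have Lc2: "\<And>a b. a \<in> ?E \<Longrightarrow> b \<in> ?E \<Longrightarrow> card (L n a) \<le> 6 \<and> card (L n b) \<le> 6" using L_card[OF n1] by blast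
  have D: "finite (Dn n) \<and> card (Dn n) \<le> ?m^2 * 6^3"
    unfolding Dn_def by (rule tup_card[OF finE]) (use Lc Lc2 in auto)
  have T: "finite (Tn n) \<and> card (Tn n) \<le> ?m^2 * 6^3"
    unfolding Tn_def by (rule tup_card[OF finE]) (use Lc Lc2 in auto)
  have m3: "?m \<le> 3*n" by (rule E_card_upper[OF n1])
  have ml: "2*n - 1 \<le> ?m" by (rule E_card_lower[OF n1])
  have Kb: "?m^2 * 6^3 \<le> 1944 * n^2"
  proof -
    have "?m^2 \<le> (3*n)^2" by (rule power_mono[OF m3]) simp
    then have "?m^2 * 6^3 \<le> (3*n)^2 * 6^3" by simp
    then show ?thesis by (simp add: power_mult_distrib)
  qed
  let ?Dd = "{xs \<in> Dn n. distinct xs}"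
  have sub: "{\<sigma>. \<sigma> permutes ?E \<and> has_twin_edges n \<sigma>} \<subseteq> (\<Union>xs\<in>?Dd. {\<sigma>. \<sigma> permutes ?E \<and> map \<sigma> xs \<in> Tn n})"
    using twin_event[OF n3] by blast
  have finDd: "finite ?Dd" using D by simp
  have xsprop: "set xs \<subseteq> ?E \<and> length xs = 5" if "xs \<in> Dn n" for xs
    using that unfolding Dn_def by (rule tup_set) (auto simp: L_sub_E[THEN subsetD])
  have "card {\<sigma>. \<sigma> permutes ?E \<and> has_twin_edges n \<sigma>} \<le> card (\<Union>xs\<in>?Dd. {\<sigma>. \<sigma> permutes ?E \<and> map \<sigma> xs \<in> Tn n})"
    by (rule card_mono[OF _ sub]) (auto intro!: finite_UN_I finDd simp: finite_permutations finE)
  also have "\<dots> \<le> (\<Sum>xs\<in>?Dd. card {\<sigma>. \<sigma> permutes ?E \<and> map \<sigma> xs \<in> Tn n})"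
    by (rule card_UN_le[OF finDd])
  also have "\<dots> \<le> card ?Dd * (card (Tn n) * fact (?m - 5))"
  proof (rule sb)
    fix xs assume xs: "xs \<in> ?Dd"
    have "card {\<sigma>. \<sigma> permutes ?E \<and> map \<sigma> xs \<in> Tn n} \<le> card (Tn n) * fact (?m - length xs)"
      using xs xsprop[of xs] T by (intro perm_in_T[OF finE]) auto
    then show "card {\<sigma>. \<sigma> permutes ?E \<and> map \<sigma> xs \<in> Tn n} \<le> card (Tn n) * fact (?m - 5)"
      using xsprop[of xs] xs by simp
  qed
  also have "\<dots> \<le> (1944 * n^2) * ((1944 * n^2) * fact (?m - 5))"
  proof -
    have "card ?Dd \<le> card (Dn n)" using D by (intro card_mono) auto
    then have "card ?Dd \<le> 1944 * n^2" using D Kb by linarith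
    moreover have "card (Tn n) \<le> 1944 * n^2" using T Kb by linarith
    ultimately show ?thesis by (intro mult_le_mono) auto
  qed
  finally have c1: "card {\<sigma>. \<sigma> permutes ?E \<and> has_twin_edges n \<sigma>} * n \<le> (1944 * n^2) * ((1944 * n^2) * fact (?m - 5)) * n"
    by simp
  also have "\<dots> = 1944^2 * (fact (?m - 5) * n^5)" by (simp add: power2_eq_square power_def algebra_simps)
  also have "\<dots> \<le> 1944^2 * (fact (?m - 5) * ((?m - 5) + 1)^5)"
    using ml n by (intro mult_le_mono order.refl power_mono) auto
  also have "\<dots> \<le> 1944^2 * fact ((?m - 5) + 5)" by (intro mult_le_mono order.refl fact_lower)
  also have "(?m - 5) + 5 = ?m" using ml n by simp
  finally show ?thesis .
qed

theorem mainTheorem10: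
  shows "twin_prob \<in> O(\<lambda>n. 1 / real n)"
proof (rule bigoI[where c = "1944^2"])
  show "\<forall>\<^sub>F n in at_top. norm (twin_prob n) \<le> 1944^2 * norm (1 / real n)"
  proof (rule eventually_at_top_linorderI[where c = 5])
    fix n :: nat assume n: "n \<ge> 5"
    let ?E = "Gn_E n"
    have n1: "n \<ge> 1" using n by simp
    have cp: "card {\<sigma>. \<sigma> permutes ?E} = fact (card ?E)"
      by (rule card_permutations[OF refl E_finite[OF n1]])
    have tp: "twin_prob n = real (card {\<sigma>. \<sigma> permutes ?E \<and> has_twin_edges n \<sigma>}) / real (fact (card ?E))"
      unfolding twin_prob_def cp ..
    have c: "real (card {\<sigma>. \<sigma> permutes ?E \<and> has_twin_edges n \<sigma>}) * real n \<le> 1944^2 * real (fact (card ?E))"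
    proof -
      have "real (card {\<sigma>. \<sigma> permutes ?E \<and> has_twin_edges n \<sigma>} * n) \<le> real (1944^2 * fact (card ?E))"
        using twin_count[OF n] by (rule of_nat_mono)
      then show ?thesis by (simp only: of_nat_mult of_nat_power of_nat_numeral)
    qed
    have fpos: "real (fact (card ?E)) > 0" by simp
    have npos: "real n > 0" using n by simp
    have "twin_prob n \<le> 1944^2 / real n"
      unfolding tp using c fpos npos by (simp add: divide_le_eq le_divide_eq field_simps)
    moreover have "twin_prob n \<ge> 0" unfolding tp by simp
    ultimately show "norm (twin_prob n) \<le> 1944^2 * norm (1 / real n)" using npos by simp
  qed
qed

end
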